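(* Let $\mathcal{G}$ be a network of type $\mathcal{C}^1$ with exactly two stubborn agents $s_1,s_2$, neither of which has a self-loop ($w_{s_1s_1}=w_{s_2s_2}=0$), whose opinions evolve by the Friedkin–Johnsen model $\mathbf{x}(k+1)=(I-\beta)W\mathbf{x}(k)+\beta\mathbf{x}(0)$; let $m$ be a global communicator and let $\mathcal{T}_1,\dots,\mathcal{T}_4$ be defined relative to $m$. Suppose $s_1$ has a direct path to $s_2$. Let $(a,b,d)$ be a permissible non-redundant edge modification such that: node $a$ satisfies (i) $a\in\mathcal{T}_3$ and (ii) every simple path from $m$ to $a$ passes through $s_2$; node $d$ violates (i) or (ii) (or both); and $\beta_{s_2}\ge 1/2$. Then the modification increases the influence centrality $c_{s_2}$.
   Context: Let $\mathcal{G}=(\mathcal{V},\mathcal{E})$, $\mathcal{V}=\{1,\dots,n\}$, be a directed graph, where an edge $(i,j)$ means information flows from $i$ to $j$. Its weighted adjacency matrix $W=[w_{ij}]$ is row-stochastic with $w_{ij}>0$ iff $(j,i)\in\mathcal{E}$. In the Friedkin–Johnsen model, $\beta=\mathrm{diag}(\beta_1,\dots,\beta_n)$ with $\beta_i\in[0,1]$, and agent $i$ is stubborn if $\beta_i>0$. Here exactly two agents $s_1,s_2$ are stubborn, with $\beta_{s_1},\beta_{s_2}\in(0,1)$. The influence centrality vector is $\mathbf{c}=P^T\mathbb{1}_n/n$ with $P=(I_n-(I_n-\beta)W)^{-1}\beta$ (and $c_{s_1}+c_{s_2}=1$). "Increases the influence centrality of $s_2$" means $c_{s_2}$ is strictly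 larger after the modification. Type $\mathcal{C}^1$: $\mathcal{G}$ is strongly connected and some node $m$ belongs to every cycle of $\mathcal{G}$ other than self-loops; such an $m$ is a global communicator. The stubborn agents are labelled using the level decomposition relative to $m$: the nodes are partitioned into disjoint sets $\mathcal{L}_0^m=\{m\},\mathcal{L}_1^m,\dots,\mathcal{L}_q^m$ such that every node $j\in\mathcal{L}_z^m$ ($z\ge1$) has its in-neighbours (other than itself) only in $\{m\}\cup\mathcal{L}_1^m\cup\dots\cup\mathcal{L}_{z-1}^m$ and at least one in-neighbour in $\mathcal{L}_{z-1}^m$; $s_1\in\mathcal{L}_u^m$, $s_2\in\mathcal{L}_v^m$ with $u\le v$. A direct path from $i$ to $j$ is a path from $i$ to $j$ that does not pass through $m$. The nodes are classified as: $\mathcal{T}_1$: nodes having a direct path from $s_1$ but not from $s_2$; $\mathcal{T}_2$: direct path from $s_2$ but not from $s_1$; $\mathcal{T}_3$: direct paths from both; $\mathcal{T}_4$: from neither. By convention $s_1\in\mathcal{T}_1$, $m\in\mathcal{T}_3$, and when $s_1$ has a direct path to $s_2$, $s_2$ and every node with a direct path from $s_2$ belong to $\mathcal{T}_3$ (so $\mathcal{T}_2=\emptyset$). Edge modification $(a,b,d)$: for distinct nodes $a,b,d$ with $w_{bd}>0$ and some $0<w<w_{bd}$, replace $w_{ba}$ by $w_{ba}+w$ (adding edge $(a,b)$ if absent) and $w_{bd}$ by $w_{bd}-w$, so the row sum of $b$ is unchanged. It is permissible if the modified network is still of type $\mathcal{C}^1$; redundant if it changes the influence centrality of neither stubborn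 agent, non-redundant otherwise. *)

theory Defs
  imports "HOL-Analysis.Analysis"
begin

text \<open>Nodes are the elements of a finite type 'n; W $ i $ j is the weight w_ij.
  An edge (i,j) (information flows from i to j) exists iff w_ji > 0.\<close>

definition edge :: "real^'n^'n \<Rightarrow> 'n \<Rightarrow> 'n \<Rightarrow> bool" where
  "edge W i j \<longleftrightarrow> W $ j $ i > 0"

definition row_stochastic :: "real^'n^'n \<Rightarrow> bool" where
  "row_stochastic W \<longleftrightarrow> (\<forall>i j. W $ i $ j \<ge> 0) \<and> (\<forall>i. (\<Sum>j\<in>UNIV. W $ i $ j) = 1)"

definition is_walk :: "real^'n^'n \<Rightarrow> 'n list \<Rightarrow> bool" where
  "is_walk W xs \<longleftrightarrow> xs \<noteq> [] \<and> (\<forall>k. Suc k < length xs \<longrightarrow> edge W (xs ! k) (xs ! Suc k))"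

definition strongly_connected :: "real^'n^'n \<Rightarrow> bool" where
  "strongly_connected W \<longleftrightarrow> (\<forall>i j. (i, j) \<in> {(x, y). edge W x y}\<^sup>*)"

definition is_cycle :: "real^'n^'n \<Rightarrow> 'n list \<Rightarrow> bool" where
  "is_cycle W xs \<longleftrightarrow> is_walk W xs \<and> distinct xs \<and> length xs \<ge> 2 \<and> edge W (last xs) (hd xs)"

definition global_communicator :: "real^'n^'n \<Rightarrow> 'n \<Rightarrow> bool" where
  "global_communicator W m \<longleftrightarrow> (\<forall>xs. is_cycle W xs \<longrightarrow> m \<in> set xs)"

definition type_C1 :: "real^'n^'n \<Rightarrow> bool" where
  "type_C1 W \<longleftrightarrow> strongly_connected W \<and> (\<exists>m. global_communicator W m)"

text \<open>Level decomposition relative to m, encoded by the level index lev: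
  L_z = {j. lev j = z}, L_0 = {m}.\<close>
definition level_decomposition :: "real^'n^'n \<Rightarrow> 'n \<Rightarrow> ('n \<Rightarrow> nat) \<Rightarrow> bool" where
  "level_decomposition W m lev \<longleftrightarrow> lev m = 0 \<and>
     (\<forall>j. j \<noteq> m \<longrightarrow> lev j \<ge> 1 \<and>
        (\<forall>i. edge W i j \<and> i \<noteq> j \<longrightarrow> lev i < lev j) \<and>
        (\<exists>i. edge W i j \<and> i \<noteq> j \<and> lev i = lev j - 1))"

definition direct_path :: "real^'n^'n \<Rightarrow> 'n \<Rightarrow> 'n \<Rightarrow> 'n \<Rightarrow> bool" where
  "direct_path W m i j \<longleftrightarrow> (\<exists>xs. is_walk W xs \<and> length xs \<ge> 2 \<and> hd xs = i \<and> last xs = j \<and> m \<notin> set xs)"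

definition in_T3 :: "real^'n^'n \<Rightarrow> 'n \<Rightarrow> 'n \<Rightarrow> 'n \<Rightarrow> 'n \<Rightarrow> bool" where
  "in_T3 W m s1 s2 j \<longleftrightarrow>
     j = m \<or>
     (direct_path W m s1 s2 \<and> (j = s2 \<or> direct_path W m s2 j)) \<or>
     (j \<noteq> s1 \<and> direct_path W m s1 j \<and> direct_path W m s2 j)"

definition is_simple_path :: "real^'n^'n \<Rightarrow> 'n \<Rightarrow> 'n \<Rightarrow> 'n list \<Rightarrow> bool" where
  "is_simple_path W i j xs \<longleftrightarrow> is_walk W xs \<and> distinct xs \<and> hd xs = i \<and> last xs = j"

definition beta_mat :: "('n \<Rightarrow> real) \<Rightarrow> real^'n^'n" where
  "beta_mat \<beta> = (\<chi> i j. if i = j then \<beta> i else 0)"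

definition FJ_P :: "real^'n^'n \<Rightarrow> ('n \<Rightarrow> real) \<Rightarrow> real^'n^'n" where
  "FJ_P W \<beta> = matrix_inv (mat 1 - (mat 1 - beta_mat \<beta>) ** W) ** beta_mat \<beta>"

definition influence_centrality :: "real^'n^'n \<Rightarrow> ('n \<Rightarrow> real) \<Rightarrow> 'n \<Rightarrow> real" where
  "influence_centrality W \<beta> j = (\<Sum>i\<in>UNIV. FJ_P W \<beta> $ i $ j) / real CARD('n)"

definition edge_mod :: "real^'n^'n \<Rightarrow> 'n \<Rightarrow> 'n \<Rightarrow> 'n \<Rightarrow> real \<Rightarrow> real^'n^'n" where
  "edge_mod W a b d w = (\<chi> i j. if i = b \<and> j = a then W $ b $ a + w
                              else if i = b \<and> j = d then W $ b $ d - w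
                              else W $ i $ j)"

end

theory Submission imports Defs begin

definition Mop :: "real^'n^'n \<Rightarrow> ('n \<Rightarrow> real) \<Rightarrow> ('n \<Rightarrow> real) \<Rightarrow> 'n \<Rightarrow> real" where
  "Mop W \<beta> z i = z i - (1 - \<beta> i) * (\<Sum>j\<in>UNIV. W$i$j * z j)"

lemma M_entry:
  "(mat 1 - (mat 1 - beta_mat \<beta>) ** W) $ i $ j = (if i = j then 1 else 0) - (1 - \<beta> i) * W$i$j"
proof -
  have e: "(mat 1 - beta_mat \<beta>)$i$k = (if i = k then 1 - \<beta> i else 0)" for k
    by (simp add: mat_def beta_mat_def)
  have "((mat 1 - beta_mat \<beta>) ** W)$i$j = (\<Sum>k\<in>UNIV. (if i = k then (1 - \<beta> i) * W$k$j else 0))"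
    unfolding matrix_matrix_mult_def vec_lambda_beta e by (rule sum.cong) auto
  also have "\<dots> = (1 - \<beta> i) * W$i$j" by simp
  finally show ?thesis by (simp add: mat_def)
qed

lemma mm_entry: "(A ** X) $ i $ j = (\<Sum>k\<in>UNIV. A$i$k * X$k$j)"
  by (simp add: matrix_matrix_mult_def)

lemma MM_entry:
  "((mat 1 - (mat 1 - beta_mat \<beta>) ** W) ** X) $ i $ j = Mop W \<beta> (\<lambda>k. X$k$j) i"
proof -
  have "((mat 1 - (mat 1 - beta_mat \<beta>) ** W) ** X) $ i $ j
      = (\<Sum>k\<in>UNIV. (if i = k then X$k$j else 0) - (1 - \<beta> i) * (W$i$k * X$k$j))"
    unfolding mm_entry[of "mat 1 - (mat 1 - beta_mat \<beta>) ** W"] M_entry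
    by (rule sum.cong) (auto simp: left_diff_distrib)
  also have "\<dots> = X$i$j - (1 - \<beta> i) * (\<Sum>k\<in>UNIV. W$i$k * X$k$j)"
    by (simp add: sum_subtractf sum_distrib_left)
  finally show ?thesis by (simp add: Mop_def)
qed

lemma Mv_entry:
  "((mat 1 - (mat 1 - beta_mat \<beta>) ** W) *v x) $ i = Mop W \<beta> (\<lambda>k. x$k) i"
proof -
  have "((mat 1 - (mat 1 - beta_mat \<beta>) ** W) *v x) $ i
      = (\<Sum>k\<in>UNIV. (if i = k then x$k else 0) - (1 - \<beta> i) * (W$i$k * x$k))"
    unfolding matrix_vector_mult_def vec_lambda_beta M_entry
    by (rule sum.cong) (auto simp: left_diff_distrib)
  also have "\<dots> = x$i - (1 - \<beta> i) * (\<Sum>k\<in>UNIV. W$i$k * x$k)"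
    by (simp add: sum_subtractf sum_distrib_left)
  finally show ?thesis by (simp add: Mop_def)
qed

lemma Mop_diff: "Mop W \<beta> (\<lambda>k. x k - y k) i = Mop W \<beta> x i - Mop W \<beta> y i"
  by (simp add: Mop_def right_diff_distrib sum_subtractf algebra_simps)

lemma Mop_neg: "Mop W \<beta> (\<lambda>k. - x k) i = - Mop W \<beta> x i"
  by (simp add: Mop_def sum_negf algebra_simps)

lemma Mop_const: "row_stochastic W \<Longrightarrow> Mop W \<beta> (\<lambda>k. c) i = c * \<beta> i"
  by (simp add: Mop_def row_stochastic_def flip: sum_distrib_right) (simp add: algebra_simps)

lemma Mop_sum: "Mop W \<beta> (\<lambda>k. \<Sum>j\<in>A. X k j) i = (\<Sum>j\<in>A. Mop W \<beta> (\<lambda>k. X k j) i)"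
proof -
  have "(\<Sum>l\<in>UNIV. W$i$l * (\<Sum>j\<in>A. X l j)) = (\<Sum>j\<in>A. \<Sum>l\<in>UNIV. W$i$l * X l j)"
    by (simp add: sum_distrib_left sum.swap[of _ A])
  then show ?thesis by (simp add: Mop_def sum_subtractf sum_distrib_left)
qed

lemma MP:
  fixes W :: "real^'n^'n"
  assumes rs: "row_stochastic W" and sc: "strongly_connected W"
    and br: "\<forall>i. 0 \<le> \<beta> i \<and> \<beta> i \<le> 1" and j0: "\<beta> j0 > 0"
    and H: "\<forall>i. z i \<ge> 0 \<or> Mop W \<beta> z i \<ge> 0"
  shows "z i \<ge> 0"
proof (rule ccontr)
  assume neg: "\<not> z i \<ge> 0"
  have fin: "finite (range z)" by simp
  have "Min (range z) \<in> range z" using Min_in[OF fin] by blast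
  then obtain k where k: "z k = Min (range z)" by (metis imageE)
  define \<mu> where "\<mu> = z k"
  have le: "\<And>x. \<mu> \<le> z x" using Min_le[OF fin] k \<mu>_def by auto
  have mneg: "\<mu> < 0" using le[of i] neg by simp
  have stp: "\<beta> y = 0 \<and> (\<forall>x. W$y$x > 0 \<longrightarrow> z x = \<mu>)" if "z y = \<mu>" for y
  proof -
    define S where "S = (\<Sum>l\<in>UNIV. W$y$l * z l)"
    have "Mop W \<beta> z y \<ge> 0" using H that mneg by force
    then have A: "\<mu> \<ge> (1 - \<beta> y) * S" using that by (simp add: Mop_def S_def)
    have "S - \<mu> = (\<Sum>l\<in>UNIV. W$y$l * (z l - \<mu>))"
      using rs by (simp add: S_def row_stochastic_def right_diff_distrib sum_subtractf
          flip: sum_distrib_right)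
    moreover have nn: "\<forall>l. W$y$l * (z l - \<mu>) \<ge> 0"
      using rs le by (simp add: row_stochastic_def)
    moreover have "(\<Sum>l\<in>UNIV. W$y$l * (z l - \<mu>)) \<ge> 0" using nn by (simp add: sum_nonneg)
    ultimately have Sge: "S \<ge> \<mu>" by linarith
    have "(1 - \<beta> y) * S \<ge> (1 - \<beta> y) * \<mu>" using br Sge by (simp add: mult_left_mono)
    with A have "\<beta> y * \<mu> \<ge> 0" by (simp add: algebra_simps)
    then have b0: "\<beta> y = 0" using br mneg by (metis less_eq_real_def mult_pos_neg not_le)
    then have "S = \<mu>" using A Sge by simp
    then have "(\<Sum>l\<in>UNIV. W$y$l * (z l - \<mu>)) = 0" using \<open>S - \<mu> = _\<close> by simp
    then have "\<forall>l. W$y$l * (z l - \<mu>) = 0" using nn sum_nonneg_eq_0_iff[of UNIV "\<lambda>l. W$y$l * (z l - \<mu>)"] by simp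
    then show ?thesis using b0 by force
  qed
  have "(j0, k) \<in> {(x, y). edge W x y}\<^sup>*" using sc by (simp add: strongly_connected_def)
  then have "z j0 = \<mu>"
  proof (induction rule: converse_rtrancl_induct)
    case base then show ?case by (simp add: \<mu>_def)
  next
    case (step x y) then show ?case using stp[of y] by (auto simp: edge_def)
  qed
  then have "\<beta> j0 = 0" using stp by blast
  then show False using j0 by simp
qed


lemma walk_snoc:
  assumes "is_walk W ys" "edge W (last ys) x"
  shows "is_walk W (ys @ [x])"
  unfolding is_walk_def
proof (intro conjI allI impI)
  show "ys @ [x] \<noteq> []" by simp
  fix k assume k: "Suc k < length (ys @ [x])"
  have ne: "ys \<noteq> []" using assms(1) by (simp add: is_walk_def)
  show "edge W ((ys @ [x]) ! k) ((ys @ [x]) ! Suc k)"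
  proof (cases "Suc k < length ys")
    case True then show ?thesis using assms(1) by (simp add: nth_append is_walk_def)
  next
    case False
    then have "k = length ys - 1" using k by simp
    then show ?thesis using assms(2) ne by (simp add: nth_append last_conv_nth)
  qed
qed

lemma walk_take:
  assumes "is_walk W ys" "0 < n"
  shows "is_walk W (take n ys)"
  using assms by (auto simp: is_walk_def)

lemma chain:
  assumes lv: "level_decomposition W m lev"
  shows "\<exists>xs. is_simple_path W m x xs \<and> length xs = Suc (lev x) \<and> (\<forall>k<length xs. lev (xs!k) = k)"
proof (induction "lev x" arbitrary: x rule: less_induct)
  case less
  show ?case
  proof (cases "x = m")
    case True
    then show ?thesis using lv
      by (intro exI[of _ "[m]"]) (auto simp: is_simple_path_def is_walk_def level_decomposition_def)
  next
    case False
    then obtain i where i: "edge W i x" "i \<noteq> x" "lev i = lev x - 1" and l1: "lev x \<ge> 1"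
      using lv by (auto simp: level_decomposition_def)
    then have "lev i < lev x" by simp
    then obtain xs where xs: "is_simple_path W m i xs" "length xs = Suc (lev i)"
       "\<forall>k<length xs. lev (xs!k) = k" using less by blast
    have ne: "xs \<noteq> []" using xs(1) by (simp add: is_simple_path_def is_walk_def)
    have "x \<notin> set xs"
    proof
      assume "x \<in> set xs"
      then obtain k where "k < length xs" "xs!k = x" by (metis in_set_conv_nth)
      then show False using xs(2,3) i(3) l1 by auto
    qed
    then have "is_simple_path W m x (xs @ [x])"
      using xs(1) i(1) ne walk_snoc[of W xs x] by (simp add: is_simple_path_def)
    moreover have "length (xs @ [x]) = Suc (lev x)" using xs(2) i(3) l1 by simp
    moreover have "\<forall>k<length (xs @ [x]). lev ((xs @ [x])!k) = k"
      using xs(2,3) i(3) l1 by (auto simp: nth_append less_Suc_eq)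
    ultimately show ?thesis by blast
  qed
qed

lemma behind:
  fixes W :: "real^'n^'n"
  assumes rs: "row_stochastic W" and lv: "level_decomposition W m lev"
    and label: "lev s1 \<le> lev s2" and s12: "s1 \<noteq> s2"
    and b0: "\<forall>x. x \<noteq> s1 \<longrightarrow> x \<noteq> s2 \<longrightarrow> \<beta> x = 0"
    and fH: "\<forall>x. x \<noteq> s1 \<longrightarrow> x \<noteq> s2 \<longrightarrow> Mop W \<beta> f x = 0"
  shows "(\<forall>xs. is_simple_path W m x xs \<longrightarrow> s2 \<in> set xs) \<Longrightarrow> f x = f s2"
proof (induction "lev x" arbitrary: x rule: less_induct)
  case less
  show ?case
  proof (cases "x = s2")
    case True then show ?thesis by simp
  next
    case ns2: False
    have nm: "x \<noteq> m"
    proof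
      assume "x = m"
      then have "is_simple_path W m x [m]" by (simp add: is_simple_path_def is_walk_def)
      then show False using less.prems ns2 \<open>x = m\<close> by auto
    qed
    have ns1: "x \<noteq> s1"
    proof
      assume xs1: "x = s1"
      obtain xs where xs: "is_simple_path W m x xs" "length xs = Suc (lev x)"
        "\<forall>k<length xs. lev (xs!k) = k" using chain[OF lv] by blast
      then have "s2 \<in> set xs" using less.prems by blast
      then obtain k where k: "k < length xs" "xs!k = s2" by (metis in_set_conv_nth)
      then have "lev s2 = k" using xs(3) by auto
      then have "k = lev x" using k xs(2) label xs1 by simp
      then have "xs!k = last xs" using xs(2) by (metis diff_Suc_1 last_conv_nth list.size(3) nat.distinct(1))
      then have "s2 = x" using k xs(1) by (simp add: is_simple_path_def)
      then show False using ns2 by simp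
    qed
    have bx: "\<beta> x = 0" using b0 ns1 ns2 by simp
    have fx: "f x = (\<Sum>j\<in>UNIV. W$x$j * f j)" using fH ns1 ns2 bx by (simp add: Mop_def)
    have nb: "f j = f s2" if j: "W$x$j > 0" "j \<noteq> x" for j
    proof -
      have ej: "edge W j x" using j by (simp add: edge_def)
      then have lt: "lev j < lev x" using lv nm j(2) by (simp add: level_decomposition_def)
      have "\<forall>ys. is_simple_path W m j ys \<longrightarrow> s2 \<in> set ys"
      proof (intro allI impI)
        fix ys assume ys: "is_simple_path W m j ys"
        have ne: "ys \<noteq> []" using ys by (simp add: is_simple_path_def is_walk_def)
        show "s2 \<in> set ys"
        proof (cases "x \<in> set ys")
          case False
          then have "is_simple_path W m x (ys @ [x])"
            using ys ej ne walk_snoc[of W ys x] by (simp add: is_simple_path_def)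
          then show ?thesis using less.prems ns2 by auto
        next
          case True
          then obtain k where k: "k < length ys" "ys!k = x" by (metis in_set_conv_nth)
          have h1: "hd (take (Suc k) ys) = m" using ys ne by (cases ys) (auto simp: is_simple_path_def)
          have h2: "last (take (Suc k) ys) = x"
          proof -
            have "take (Suc k) ys \<noteq> []" using ne by simp
            then have "last (take (Suc k) ys) = take (Suc k) ys ! (length (take (Suc k) ys) - 1)"
              by (rule last_conv_nth)
            also have "\<dots> = ys ! k" using k by simp
            finally show ?thesis using k by simp
          qed
          have h3: "distinct (take (Suc k) ys)" using ys by (simp add: is_simple_path_def)
          have "is_simple_path W m x (take (Suc k) ys)"
            using ys h1 h2 h3 walk_take[of W ys "Suc k"]
            by (simp add: is_simple_path_def)
          then have "s2 \<in> set (take (Suc k) ys)" using less.prems by blast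
          then show ?thesis by (meson in_set_takeD)
        qed
      qed
      then show ?thesis using less.hyps lt by blast
    qed
    obtain i where i: "edge W i x" "i \<noteq> x" using lv nm by (auto simp: level_decomposition_def)
    have "(\<Sum>j\<in>UNIV. W$x$j * f j) = (\<Sum>j\<in>UNIV. W$x$j * f s2 + (if j = x then W$x$x * (f x - f s2) else 0))"
    proof (rule sum.cong)
      fix j assume "j \<in> (UNIV::'n set)"
      show "W$x$j * f j = W$x$j * f s2 + (if j = x then W$x$x * (f x - f s2) else 0)"
      proof (cases "j = x")
        case True then show ?thesis by (simp add: algebra_simps)
      next
        case False
        have "W$x$j \<ge> 0" using rs by (simp add: row_stochastic_def)
        then show ?thesis using nb[of j] False by (cases "W$x$j > 0") auto
      qed
    qed simp
    also have "\<dots> = f s2 + W$x$x * (f x - f s2)"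
      using rs by (simp add: sum.distrib row_stochastic_def flip: sum_distrib_right)
    finally have eq: "(1 - W$x$x) * (f x - f s2) = 0" using fx by (simp add: algebra_simps)
    have "W$x$x + W$x$i \<le> (\<Sum>j\<in>UNIV. W$x$j)"
    proof -
      have "(\<Sum>j\<in>{x,i}. W$x$j) \<le> (\<Sum>j\<in>UNIV. W$x$j)"
        using rs by (intro sum_mono2) (auto simp: row_stochastic_def)
      then show ?thesis using i(2) by simp
    qed
    then have "W$x$x < 1" using rs i(1) by (simp add: row_stochastic_def edge_def)
    then show ?thesis using eq by simp
  qed
qed


lemma inj_Mop:
  fixes W :: "real^'n^'n"
  assumes rs: "row_stochastic W" and sc: "strongly_connected W"
    and br: "\<forall>i. 0 \<le> \<beta> i \<and> \<beta> i \<le> 1" and j0: "\<beta> j0 > 0"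
    and H: "\<forall>i. Mop W \<beta> z i = 0"
  shows "z i = 0"
proof -
  have "z i \<ge> 0" using MP[OF rs sc br j0, of z] H by simp
  moreover have "- z i \<ge> 0" using MP[OF rs sc br j0, of "\<lambda>k. - z k"] H by (simp add: Mop_neg)
  ultimately show ?thesis by simp
qed

lemma FJ_facts:
  fixes W :: "real^'n^'n"
  assumes rs: "row_stochastic W" and sc: "strongly_connected W"
    and br: "\<forall>i. 0 \<le> \<beta> i \<and> \<beta> i \<le> 1" and j0: "\<beta> j0 > 0"
  shows "Mop W \<beta> (\<lambda>k. FJ_P W \<beta> $ k $ j) i = (if i = j then \<beta> i else 0)"
    and "FJ_P W \<beta> $ i $ j = matrix_inv (mat 1 - (mat 1 - beta_mat \<beta>) ** W) $ i $ j * \<beta> j"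
proof -
  define M where "M = mat 1 - (mat 1 - beta_mat \<beta>) ** W"
  have "\<forall>x. M *v x = 0 \<longrightarrow> x = 0"
  proof (intro allI impI)
    fix x assume "M *v x = 0"
    then have "\<forall>i. Mop W \<beta> (\<lambda>k. x$k) i = 0"
      by (metis M_def Mv_entry zero_index)
    then have "\<forall>k. x$k = 0" using inj_Mop[OF rs sc br j0] by blast
    then show "x = 0" by (simp add: vec_eq_iff)
  qed
  then have "invertible M" using matrix_left_invertible_ker invertible_left_inverse by blast
  then have "\<exists>A'. M ** A' = mat 1 \<and> A' ** M = mat 1" by (simp add: invertible_def)
  then have "M ** matrix_inv M = mat 1 \<and> matrix_inv M ** M = mat 1"
    unfolding matrix_inv_def by (rule someI_ex)
  then have "M ** FJ_P W \<beta> = beta_mat \<beta>"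
    by (simp add: FJ_P_def M_def matrix_mul_assoc matrix_mul_lid)
  then have "(M ** FJ_P W \<beta>) $ i $ j = beta_mat \<beta> $ i $ j" by simp
  then have "Mop W \<beta> (\<lambda>k. FJ_P W \<beta> $ k $ j) i = beta_mat \<beta> $ i $ j"
    by (simp only: M_def MM_entry)
  then show "Mop W \<beta> (\<lambda>k. FJ_P W \<beta> $ k $ j) i = (if i = j then \<beta> i else 0)"
    by (simp add: beta_mat_def)
  have "FJ_P W \<beta> $ i $ j = (\<Sum>k\<in>UNIV. matrix_inv M $ i $ k * (if k = j then \<beta> j else 0))"
    unfolding FJ_P_def mm_entry M_def[symmetric] by (rule sum.cong) (auto simp: beta_mat_def)
  also have "\<dots> = matrix_inv M $ i $ j * \<beta> j"
    by (simp add: if_distrib cong: if_cong)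
  finally show "FJ_P W \<beta> $ i $ j = matrix_inv (mat 1 - (mat 1 - beta_mat \<beta>) ** W) $ i $ j * \<beta> j"
    by (simp add: M_def)
qed

lemma FJ_rowsum:
  fixes W :: "real^'n^'n"
  assumes rs: "row_stochastic W" and sc: "strongly_connected W"
    and br: "\<forall>i. 0 \<le> \<beta> i \<and> \<beta> i \<le> 1" and j0: "\<beta> j0 > 0"
  shows "(\<Sum>j\<in>UNIV. FJ_P W \<beta> $ i $ j) = 1"
proof -
  define g where "g = (\<lambda>k. (\<Sum>j\<in>UNIV. FJ_P W \<beta> $ k $ j) - 1)"
  have "Mop W \<beta> g i = 0" for i
  proof -
    have "Mop W \<beta> g i = (\<Sum>j\<in>UNIV. Mop W \<beta> (\<lambda>k. FJ_P W \<beta> $ k $ j) i) - \<beta> i"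
      unfolding g_def Mop_diff Mop_sum Mop_const[OF rs] by simp
    also have "\<dots> = 0" using FJ_facts(1)[OF rs sc br j0] by simp
    finally show ?thesis .
  qed
  then have "g i = 0" using inj_Mop[OF rs sc br j0] by blast
  then show ?thesis by (simp add: g_def)
qed

lemma Mop_change:
  fixes W :: "real^'n^'n"
  assumes ad: "a \<noteq> d"
  shows "Mop (edge_mod W a b d w) \<beta> x i = Mop W \<beta> x i - (if i = b then (1 - \<beta> b) * w * (x a - x d) else 0)"
proof (cases "i = b")
  case False
  then show ?thesis by (simp add: Mop_def edge_mod_def)
next
  case True
  have "(\<Sum>j\<in>UNIV. edge_mod W a b d w $ i $ j * x j)
      = (\<Sum>j\<in>UNIV. W$i$j * x j + ((if j = a then w * x a else 0) - (if j = d then w * x d else 0)))"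
    by (rule sum.cong) (use True ad in \<open>auto simp: edge_mod_def algebra_simps\<close>)
  also have "\<dots> = (\<Sum>j\<in>UNIV. W$i$j * x j) + w * (x a - x d)"
    by (simp add: sum.distrib sum_subtractf algebra_simps)
  finally have e: "(\<Sum>j\<in>UNIV. edge_mod W a b d w $ i $ j * x j) = (\<Sum>j\<in>UNIV. W$i$j * x j) + w * (x a - x d)" .
  show ?thesis using True unfolding Mop_def e by (simp add: algebra_simps)
qed

lemma edge_mod_rs:
  fixes W :: "real^'n^'n"
  assumes rs: "row_stochastic W" and ad: "a \<noteq> d" and w: "0 < w" "w < W$b$d"
  shows "row_stochastic (edge_mod W a b d w)"
  unfolding row_stochastic_def
proof (intro conjI allI)
  fix i j
  show "0 \<le> edge_mod W a b d w $ i $ j"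
    using rs w by (auto simp: edge_mod_def row_stochastic_def intro: add_nonneg_nonneg)
next
  fix i
  show "(\<Sum>j\<in>UNIV. edge_mod W a b d w $ i $ j) = 1"
  proof (cases "i = b")
    case False then show ?thesis using rs by (simp add: edge_mod_def row_stochastic_def)
  next
    case True
    have "(\<Sum>j\<in>UNIV. edge_mod W a b d w $ i $ j)
      = (\<Sum>j\<in>UNIV. W$i$j + ((if j = a then w else 0) - (if j = d then w else 0)))"
      by (rule sum.cong) (use True ad in \<open>auto simp: edge_mod_def\<close>)
    also have "\<dots> = 1" using rs by (simp add: sum.distrib sum_subtractf row_stochastic_def)
    finally show ?thesis .
  qed
qed

theorem corollary1:
  fixes W :: "real^'n^'n" and \<beta> :: "'n \<Rightarrow> real"
    and s1 s2 m a b d :: 'n and w :: real and lev :: "'n \<Rightarrow> nat"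
  assumes stoch: "row_stochastic W"
    and C1: "type_C1 W"
    and gc: "global_communicator W m"
    and levels: "level_decomposition W m lev" and label: "lev s1 \<le> lev s2"
    and beta_range: "\<forall>i. 0 \<le> \<beta> i \<and> \<beta> i \<le> 1"
    and s12: "s1 \<noteq> s2"
    and stubborn: "\<forall>i. \<beta> i > 0 \<longleftrightarrow> i = s1 \<or> i = s2"
    and beta_lt1: "\<beta> s1 < 1" "\<beta> s2 < 1"
    and noloop: "W $ s1 $ s1 = 0" "W $ s2 $ s2 = 0"
    and dp: "direct_path W m s1 s2"
    and distinct: "a \<noteq> b" "b \<noteq> d" "a \<noteq> d"
    and w_pos: "0 < w" and w_lt: "w < W $ b $ d"
    and permissible: "type_C1 (edge_mod W a b d w)"
    and nonredundant: "influence_centrality (edge_mod W a b d w) \<beta> s1 \<noteq> influence_centrality W \<beta> s1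
                     \<or> influence_centrality (edge_mod W a b d w) \<beta> s2 \<noteq> influence_centrality W \<beta> s2"
    and a_i: "in_T3 W m s1 s2 a"
    and a_ii: "\<forall>xs. is_simple_path W m a xs \<longrightarrow> s2 \<in> set xs"
    and d_viol: "\<not> (in_T3 W m s1 s2 d \<and> (\<forall>xs. is_simple_path W m d xs \<longrightarrow> s2 \<in> set xs))"
    and beta_half: "\<beta> s2 \<ge> 1/2"
  shows "influence_centrality (edge_mod W a b d w) \<beta> s2 > influence_centrality W \<beta> s2"
proof -
  define W' where "W' = edge_mod W a b d w"
  define P where "P = FJ_P W \<beta>"
  define P' where "P' = FJ_P W' \<beta>"
  have sc: "strongly_connected W" using C1 by (simp add: type_C1_def)
  have sc': "strongly_connected W'" using permissible by (simp add: type_C1_def W'_def)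
  have rs': "row_stochastic W'" unfolding W'_def by (rule edge_mod_rs[OF stoch distinct(3) w_pos w_lt])
  have j0: "\<beta> s1 > 0" using stubborn by simp
  have b0: "\<forall>x. x \<noteq> s1 \<longrightarrow> x \<noteq> s2 \<longrightarrow> \<beta> x = 0" using stubborn beta_range
    by (metis linorder_not_le order_antisym)
  have bb: "\<beta> b < 1" using b0 beta_lt1 by (cases "b = s1 \<or> b = s2") auto
  have HP: "Mop W \<beta> (\<lambda>k. P $ k $ j) i = (if i = j then \<beta> i else 0)" for i j
    unfolding P_def by (rule FJ_facts(1)[OF stoch sc beta_range j0])
  have HP': "Mop W' \<beta> (\<lambda>k. P' $ k $ j) i = (if i = j then \<beta> i else 0)" for i j
    unfolding P'_def by (rule FJ_facts(1)[OF rs' sc' beta_range j0])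
  define D where "D = (\<lambda>j i. P' $ i $ j - P $ i $ j)"
  have MD: "Mop W' \<beta> (D j) i = (if i = b then (1 - \<beta> b) * w * (P $ a $ j - P $ d $ j) else 0)" for i j
  proof -
    have "Mop W' \<beta> (D j) i = Mop W' \<beta> (\<lambda>k. P' $ k $ j) i - Mop W' \<beta> (\<lambda>k. P $ k $ j) i"
      unfolding D_def by (rule Mop_diff)
    moreover have "Mop W' \<beta> (\<lambda>k. P $ k $ j) i = Mop W \<beta> (\<lambda>k. P $ k $ j) i
        - (if i = b then (1 - \<beta> b) * w * (P $ a $ j - P $ d $ j) else 0)"
      unfolding W'_def by (rule Mop_change[OF distinct(3)])
    ultimately have "Mop W' \<beta> (D j) i = (if i = j then \<beta> i else 0) - ((if i = j then \<beta> i else 0)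
        - (if i = b then (1 - \<beta> b) * w * (P $ a $ j - P $ d $ j) else 0))"
      using HP' HP by simp
    then show ?thesis by simp
  qed
  define f where "f = (\<lambda>k. P $ k $ s2)"
  have fge: "f i \<ge> 0" for i
  proof -
    have "\<forall>i. Mop W \<beta> f i \<ge> 0" using HP beta_range by (simp add: f_def)
    then show ?thesis using MP[OF stoch sc beta_range j0, of f] by blast
  qed
  have fle: "f i \<le> f s2" for i
  proof -
    have "\<forall>i. (f s2 - f i) \<ge> 0 \<or> Mop W \<beta> (\<lambda>i. f s2 - f i) i \<ge> 0"
    proof
      fix i
      show "(f s2 - f i) \<ge> 0 \<or> Mop W \<beta> (\<lambda>i. f s2 - f i) i \<ge> 0"
      proof (cases "i = s2")
        case True then show ?thesis by simp
      next
        case False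
        have "Mop W \<beta> (\<lambda>i. f s2 - f i) i = f s2 * \<beta> i"
          unfolding Mop_diff Mop_const[OF stoch] using HP False by (simp add: f_def)
        then show ?thesis using fge[of s2] beta_range by simp
      qed
    qed
    from MP[OF stoch sc beta_range j0, of "\<lambda>i. f s2 - f i", OF this] show ?thesis by simp
  qed
  have fa: "f a = f s2"
  proof (rule behind[OF stoch levels label s12 b0])
    show "\<forall>x. x \<noteq> s1 \<longrightarrow> x \<noteq> s2 \<longrightarrow> Mop W \<beta> f x = 0" using HP unfolding f_def by simp
    show "\<forall>xs. is_simple_path W m a xs \<longrightarrow> s2 \<in> set xs" by (rule a_ii)
  qed
  have fad: "f a \<ge> f d" using fa fle by simp
  have Dge: "D s2 i \<ge> 0" for i
  proof -
    have "\<forall>i. D s2 i \<ge> 0 \<or> Mop W' \<beta> (D s2) i \<ge> 0"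
      using MD[of s2] fad bb w_pos by (simp add: f_def)
    then show ?thesis using MP[OF rs' sc' beta_range j0] by blast
  qed
  have sumD: "(\<Sum>i\<in>UNIV. P' $ i $ j) - (\<Sum>i\<in>UNIV. P $ i $ j) = (\<Sum>i\<in>UNIV. D j i)" for j
    by (simp add: D_def sum_subtractf)
  have cardpos: "real CARD('n) > 0" by simp
  have ic: "influence_centrality W' \<beta> j - influence_centrality W \<beta> j
      = (\<Sum>i\<in>UNIV. D j i) / real CARD('n)" for j
    unfolding influence_centrality_def P_def[symmetric] P'_def[symmetric] sumD[symmetric]
    by (simp add: diff_divide_distrib)
  have "(\<Sum>i\<in>UNIV. D s2 i) > 0"
  proof (rule ccontr)
    assume "\<not> (\<Sum>i\<in>UNIV. D s2 i) > 0"
    moreover have "(\<Sum>i\<in>UNIV. D s2 i) \<ge> 0" using Dge by (simp add: sum_nonneg)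
    ultimately have "(\<Sum>i\<in>UNIV. D s2 i) = 0" by simp
    then have D2: "\<forall>i. D s2 i = 0" using Dge sum_nonneg_eq_0_iff[of UNIV "D s2"] by simp
    then have "Mop W' \<beta> (D s2) b = 0" by (simp add: Mop_def)
    then have "(1 - \<beta> b) * w * (P $ a $ s2 - P $ d $ s2) = 0" using MD[of s2 b] by simp
    then have eq2: "P $ a $ s2 = P $ d $ s2" using bb w_pos by simp
    have split: "(\<Sum>j\<in>UNIV. P $ i $ j) = P $ i $ s1 + P $ i $ s2" for i
    proof -
      have "(\<Sum>j\<in>UNIV. P $ i $ j) = (\<Sum>j\<in>UNIV. (if j = s1 then P $ i $ s1 else 0) + (if j = s2 then P $ i $ s2 else 0))"
      proof (rule sum.cong)
        fix j assume "j \<in> (UNIV :: 'n set)"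
        show "P $ i $ j = (if j = s1 then P $ i $ s1 else 0) + (if j = s2 then P $ i $ s2 else 0)"
          using s12 b0 FJ_facts(2)[OF stoch sc beta_range j0] by (auto simp: P_def)
      qed simp
      also have "\<dots> = P $ i $ s1 + P $ i $ s2" by (simp add: sum.distrib)
      finally show ?thesis .
    qed
    have "P $ a $ s1 = P $ d $ s1"
      using split[of a] split[of d] eq2 FJ_rowsum[OF stoch sc beta_range j0]
      unfolding P_def by simp
    then have "\<forall>i. Mop W' \<beta> (D s1) i = 0" using MD by simp
    then have D1: "\<forall>i. D s1 i = 0" using inj_Mop[OF rs' sc' beta_range j0] by blast
    have "influence_centrality W' \<beta> s1 = influence_centrality W \<beta> s1"
      using ic[of s1] D1 by simp
    moreover have "influence_centrality W' \<beta> s2 = influence_centrality W \<beta> s2"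
      using ic[of s2] D2 by simp
    ultimately show False using nonredundant unfolding W'_def by simp
  qed
  then have "influence_centrality W' \<beta> s2 - influence_centrality W \<beta> s2 > 0"
    using ic[of s2] cardpos by simp
  then show ?thesis unfolding W'_def by simp
qed

end
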